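(* Let $m$ be an integer with $m=3$ or $m\geqslant 5$, and let $\mathcal{H}_m$ be the binary Hamming code of length $n=2^m-1$ (an $[n,n-m,3]$ code). Then $\mathcal{H}_m$ is log-concave.
   Context: The binary Hamming code $\mathcal{H}_m$ is the binary linear code of length $2^m-1$ whose parity-check matrix has as columns all $2^m-1$ nonzero vectors of $\mathbb{F}_2^m$ (equivalently, the dual of the binary simplex code). For a linear code $\mathcal C$ of length $n$, $A_i$ denotes the number of codewords of Hamming weight $i$. The nonzero weight distribution of $\mathcal C$ is the subsequence $a_0,a_1,\dots,a_N$ of $A_0,A_1,\dots,A_n$ consisting of the nonzero values, in their order of appearance (so $a_0=A_0=1$). A sequence $a_0,\dots,a_N$ is log-concave if $a_i^2\geqslant a_{i-1}a_{i+1}$ for all $1\leqslant i\leqslant N-1$. A linear code is called log-concave if its nonzero weight distribution is log-concave. *)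

theory Defs
  imports Main
begin

text \<open>Binary words of length n are modelled as functions nat \<Rightarrow> bool that vanish
  outside the coordinate positions {0..<n} (True = 1 in F_2).\<close>

definition words :: "nat \<Rightarrow> (nat \<Rightarrow> bool) set" where
  "words n = {c. \<forall>j\<ge>n. \<not> c j}"

definition hweight :: "nat \<Rightarrow> (nat \<Rightarrow> bool) \<Rightarrow> nat" where
  "hweight n c = card {j. j < n \<and> c j}"

text \<open>Binary Hamming code H_m of length 2^m - 1: the kernel of the m x (2^m-1)
  parity-check matrix H whose column at position j is the binary expansion of j+1
  (entry in row i is bit i of j+1). These columns run through all nonzero vectors of F_2^m.
  c is in the kernel iff for every row i, the sum over F_2 of H(i,j) c(j) is 0.\<close>

definition hamming_code :: "nat \<Rightarrow> (nat \<Rightarrow> bool) set" where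
  "hamming_code m = {c \<in> words (2^m - 1).
      \<forall>i<m. even (card {j. j < 2^m - 1 \<and> c j \<and> odd ((j + 1) div 2^i)})}"

definition weight_count :: "(nat \<Rightarrow> bool) set \<Rightarrow> nat \<Rightarrow> nat \<Rightarrow> nat" where
  "weight_count C n i = card {c \<in> C. hweight n c = i}"

definition nonzero_weight_distribution :: "(nat \<Rightarrow> bool) set \<Rightarrow> nat \<Rightarrow> nat list" where
  "nonzero_weight_distribution C n = filter (\<lambda>a. a \<noteq> 0) (map (weight_count C n) [0..<n+1])"

definition log_concave :: "nat list \<Rightarrow> bool" where
  "log_concave a = (\<forall>i. 1 \<le> i \<and> i + 1 < length a \<longrightarrow> a ! (i - 1) * a ! (i + 1) \<le> (a ! i)^2)"

definition log_concave_code :: "(nat \<Rightarrow> bool) set \<Rightarrow> nat \<Rightarrow> bool" where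
  "log_concave_code C n = log_concave (nonzero_weight_distribution C n)"

end

theory Submission
  imports Defs "HOL.Binomial_Plus"
begin


definition par :: "nat \<Rightarrow> nat set \<Rightarrow> bool" where
  "par k S = odd (card {j\<in>S. odd ((j+1) div 2^k)})"

definition cd :: "nat \<Rightarrow> nat set \<Rightarrow> bool" where
  "cd m S = (\<forall>k<m. \<not> par k S)"

definition Acnt :: "nat \<Rightarrow> nat \<Rightarrow> nat" where
  "Acnt m i = card {S. S \<subseteq> {..<2^m-1} \<and> cd m S \<and> card S = i}"

lemma wc_eq: "weight_count (hamming_code m) (2^m-1) i = Acnt m i"
proof -
  let ?n = "2^m-1::nat"
  let ?F = "{S. S \<subseteq> {..<?n} \<and> cd m S \<and> card S = i}"
  have inj: "inj_on (\<lambda>S j. j \<in> S) ?F"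
  proof (rule inj_onI)
    fix S T assume "(\<lambda>j. j \<in> S) = (\<lambda>j. j \<in> T)"
    then show "S = T" by (metis Collect_mem_eq)
  qed
  have img: "(\<lambda>S j. j \<in> S) ` ?F = {c \<in> hamming_code m. hweight ?n c = i}"
  proof (intro equalityI subsetI)
    fix c assume "c \<in> (\<lambda>S j. j \<in> S) ` ?F"
    then obtain S where S: "S \<subseteq> {..<?n}" "cd m S" "card S = i" and c: "c = (\<lambda>j. j \<in> S)" by auto
    have e1: "{j. j < ?n \<and> c j} = S" using S(1) c by auto
    have e2: "\<And>k. {j. j < ?n \<and> c j \<and> odd ((j + 1) div 2^k)} = {j\<in>S. odd ((j+1) div 2^k)}"
      using S(1) c by auto
    show "c \<in> {c \<in> hamming_code m. hweight ?n c = i}"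
      using S(1,2,3) e1 e2 c unfolding hamming_code_def words_def hweight_def cd_def par_def by auto
  next
    fix c assume c: "c \<in> {c \<in> hamming_code m. hweight ?n c = i}"
    define S where "S = {j. j < ?n \<and> c j}"
    have cS: "c = (\<lambda>j. j \<in> S)" using c unfolding S_def hamming_code_def words_def
      by (auto simp: fun_eq_iff) (meson not_le)
    have e2: "\<And>k. {j. j < ?n \<and> c j \<and> odd ((j + 1) div 2^k)} = {j\<in>S. odd ((j+1) div 2^k)}"
      unfolding S_def by auto
    have "S \<in> ?F" using c e2 unfolding S_def hamming_code_def hweight_def cd_def par_def
      by auto
    then show "c \<in> (\<lambda>S j. j \<in> S) ` ?F" using cS by blast
  qed
  show ?thesis unfolding weight_count_def Acnt_def using card_image[OF inj] img by simp
qed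

definition B :: "nat \<Rightarrow> nat \<Rightarrow> bool" where "B p k = odd ((p+1) div 2^k)"

lemma par_insert: "finite S \<Longrightarrow> p \<notin> S \<Longrightarrow> par k (insert p S) = (par k S \<noteq> B p k)"
proof -
  assume f: "finite S" and p: "p \<notin> S"
  show ?thesis
  proof (cases "B p k")
    case True
    then have "{j\<in>insert p S. odd ((j+1) div 2^k)} = insert p {j\<in>S. odd ((j+1) div 2^k)}"
      unfolding B_def by auto
    then show ?thesis using f p True unfolding par_def by simp
  next
    case False
    then have "{j\<in>insert p S. odd ((j+1) div 2^k)} = {j\<in>S. odd ((j+1) div 2^k)}"
      unfolding B_def by auto
    then show ?thesis using False unfolding par_def by simp
  qed
qed

lemma par_remove: "finite S \<Longrightarrow> p \<in> S \<Longrightarrow> par k (S - {p}) = (par k S \<noteq> B p k)"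
  using par_insert[of "S - {p}" p k] by (auto simp: insert_absorb)

lemma B_unique:
  assumes "p < 2^m - 1" "q < 2^m - 1" "\<forall>k<m. B p k = B q k"
  shows "p = q"
proof -
  have "\<And>k. bit (p+1) k = bit (q+1) k"
  proof -
    fix k
    show "bit (p+1) k = bit (q+1) k"
    proof (cases "k < m")
      case True then show ?thesis using assms(3) by (simp add: B_def bit_iff_odd)
    next
      case False
      then have "(2::nat)^m \<le> 2^k" by simp
      moreover have "p+1 < 2^m" "q+1 < 2^m" using assms(1,2) by simp_all
      ultimately have "p+1 < 2^k" "q+1 < 2^k" by linarith+
      then have "(p+1) div 2^k = 0" "(q+1) div 2^k = 0" by (simp_all add: div_less)
      then show ?thesis by (simp add: bit_iff_odd)
    qed
  qed
  then have "p + 1 = q + 1" by (simp add: bit_eq_iff)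
  then show ?thesis by simp
qed

lemma B_nonzero:
  assumes "p < 2^m - 1" shows "\<exists>k<m. B p k"
proof (rule ccontr)
  assume a: "\<not> (\<exists>k<m. B p k)"
  have "\<And>k. bit (p+1) k = bit (0::nat) k"
  proof -
    fix k
    show "bit (p+1) k = bit (0::nat) k"
    proof (cases "k < m")
      case True then show ?thesis using a by (simp add: B_def bit_iff_odd)
    next
      case False
      then have "(2::nat)^m \<le> 2^k" by simp
      moreover have "p+1 < 2^m" using assms by simp
      ultimately have "p+1 < 2^k" by linarith
      then have "(p+1) div 2^k = 0" by (simp add: div_less)
      then show ?thesis by (simp add: bit_iff_odd)
    qed
  qed
  then have "p + 1 = 0" by (simp add: bit_eq_iff)
  then show False by simp
qed

lemma B_exists:
  assumes "\<exists>k<m. par k S"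
  shows "\<exists>p < 2^m - 1. \<forall>k<m. B p k = par k S"
proof -
  define s :: nat where "s = horner_sum of_bool 2 (map (\<lambda>k. par k S) [0..<m])"
  have bs: "bit s k = (k < m \<and> par k S)" for k
    unfolding s_def bit_horner_sum_bit_iff by auto
  have sl: "s < 2^m" unfolding s_def using horner_sum_of_bool_2_less[of "map (\<lambda>k. par k S) [0..<m]"]
    by simp
  obtain k0 where "k0 < m" "par k0 S" using assms by blast
  then have "bit s k0" using bs by blast
  have "s \<noteq> 0"
  proof
    assume "s = 0"
    then show False using \<open>bit s k0\<close> by simp
  qed
  then have 1: "s - 1 < 2^m - 1" and 2: "s - 1 + 1 = s" using sl by linarith+
  have "B (s-1) k = par k S" if "k < m" for k
  proof -
    have "B (s-1) k = bit s k" unfolding B_def 2 by (simp add: bit_iff_odd)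
    then show ?thesis using bs that by blast
  qed
  then show ?thesis using 1 by blast
qed

definition flip :: "nat set \<Rightarrow> nat \<Rightarrow> nat set" where
  "flip S p = (if p \<in> S then S - {p} else insert p S)"

lemma par_flip: "finite S \<Longrightarrow> par k (flip S p) = (par k S \<noteq> B p k)"
  unfolding flip_def using par_insert par_remove by auto

lemma flip_uniq:
  assumes "finite S" "p < 2^m - 1" "q < 2^m - 1" "cd m (flip S p)" "cd m (flip S q)"
  shows "p = q"
proof (rule B_unique[OF assms(2,3)], intro allI impI)
  fix k assume "k < m"
  then have "\<not> par k (flip S p)" "\<not> par k (flip S q)" using assms(4,5) unfolding cd_def by auto
  then show "B p k = B q k" using par_flip[OF assms(1)] by metis
qed

lemma flip_notcd:
  assumes "finite S" "p < 2^m - 1" "cd m S"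
  shows "\<not> cd m (flip S p)"
proof -
  obtain k where "k < m" "B p k" using B_nonzero[OF assms(2)] by blast
  then have "par k (flip S p)" using assms(3) par_flip[OF assms(1)] unfolding cd_def by auto
  then show ?thesis using \<open>k < m\<close> unfolding cd_def by auto
qed

lemma Acnt_0: "Acnt m 0 = 1"
proof -
  have "{S. S \<subseteq> {..<2^m-1} \<and> cd m S \<and> card S = 0} = {{}}"
  proof (intro equalityI subsetI)
    fix S assume "S \<in> {S. S \<subseteq> {..<2^m-1} \<and> cd m S \<and> card S = 0}"
    then have "S \<subseteq> {..<2^m-1}" "card S = 0" by auto
    then have "S = {}" using finite_subset by fastforce
    then show "S \<in> {{}}" by simp
  next
    fix S assume "S \<in> {{}::nat set}"
    then show "S \<in> {S. S \<subseteq> {..<2^m-1} \<and> cd m S \<and> card S = 0}"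
      by (simp add: cd_def par_def)
  qed
  then show ?thesis unfolding Acnt_def by simp
qed

lemma Acnt_1: "Acnt m 1 = 0"
proof -
  have "{S. S \<subseteq> {..<2^m-1} \<and> cd m S \<and> card S = 1} = {}"
  proof (intro equalityI subsetI)
    fix S assume "S \<in> {S. S \<subseteq> {..<2^m-1} \<and> cd m S \<and> card S = 1}"
    then have S: "S \<subseteq> {..<2^m-1}" "card S = 1" "cd m S" by auto
    then obtain p where p: "S = {p}" by (meson card_1_singletonE)
    then have "p < 2^m - 1" using S by auto
    have "cd m {}" by (simp add: cd_def par_def)
    then have "\<not> cd m (flip {} p)" using flip_notcd[OF _ \<open>p < 2^m - 1\<close>] by blast
    moreover have "flip {} p = S" using p by (simp add: flip_def)
    ultimately show "S \<in> {}" using S by simp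
  qed simp
  then show ?thesis unfolding Acnt_def by simp
qed

lemma Acnt_rec:
  assumes i: "1 \<le> i"
  shows "(2^m-1) choose i = Acnt m i + (i+1) * Acnt m (i+1) + ((2^m-1) - (i-1)) * Acnt m (i-1)"
proof -
  define n :: nat where "n = 2^m - 1"
  define U where "U = {..<n}"
  define H where "H j = {S. S \<subseteq> U \<and> cd m S \<and> card S = j}" for j
  define W where "W = {S. S \<subseteq> U \<and> card S = i}"
  define X where "X = (\<lambda>(T,p). insert p T) ` Sigma (H (i-1)) (\<lambda>T. U - T)"
  define Y where "Y = (\<lambda>(T,p). T - {p}) ` Sigma (H (i+1)) (\<lambda>T. T)"
  have fU: "finite U" unfolding U_def by simp
  have finH: "finite (H j)" for j
    by (rule finite_subset[of _ "Pow U"]) (auto simp: H_def fU)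
  have fin_sub: "S \<subseteq> U \<Longrightarrow> finite S" for S using fU finite_subset by blast
  have cardW: "card W = n choose i" unfolding W_def using n_subsets[OF fU, of i] by (simp add: U_def)
  have AH: "Acnt m j = card (H j)" for j unfolding Acnt_def H_def U_def n_def by simp
  have WX: "W = H i \<union> X \<union> Y"
  proof (intro equalityI subsetI)
    fix S assume S: "S \<in> W"
    then have SU: "S \<subseteq> U" and cS: "card S = i" and fS: "finite S" using fin_sub unfolding W_def by auto
    show "S \<in> H i \<union> X \<union> Y"
    proof (cases "cd m S")
      case True then show ?thesis using SU cS unfolding H_def by auto
    next
      case False
      then have "\<exists>k<m. par k S" unfolding cd_def by auto
      from B_exists[OF this] obtain p where p: "p < n" "\<forall>k<m. B p k = par k S"
        unfolding n_def by blast
      have cdf: "cd m (flip S p)" unfolding cd_def using p(2) par_flip[OF fS] by auto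
      show ?thesis
      proof (cases "p \<in> S")
        case True
        have "S - {p} \<in> H (i-1)" using cdf True SU cS fS unfolding H_def flip_def by auto
        moreover have "p \<in> U - (S - {p})" using True SU by auto
        moreover have "S = insert p (S - {p})" using True by auto
        ultimately have "S \<in> X" unfolding X_def by (auto intro!: image_eqI[where x="(S - {p}, p)"])
        then show ?thesis by blast
      next
        case False
        have "insert p S \<in> H (i+1)" using cdf False SU cS fS p(1) unfolding H_def flip_def U_def by auto
        moreover have "p \<in> insert p S" by simp
        moreover have "S = insert p S - {p}" using False by auto
        ultimately have "S \<in> Y" unfolding Y_def by (auto intro!: image_eqI[where x="(insert p S, p)"])
        then show ?thesis by blast
      qed
    qed
  next
    fix S assume "S \<in> H i \<union> X \<union> Y"
    then consider "S \<in> H i" | "S \<in> X" | "S \<in> Y" by blast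
    then show "S \<in> W"
    proof cases
      case 1 then show ?thesis unfolding H_def W_def by auto
    next
      case 2
      then obtain T p where T: "T \<in> H (i-1)" "p \<in> U - T" "S = insert p T" unfolding X_def by auto
      then have "finite T" using fin_sub unfolding H_def by auto
      then show ?thesis using T i unfolding H_def W_def by auto
    next
      case 3
      then obtain T p where T: "T \<in> H (i+1)" "p \<in> T" "S = T - {p}" unfolding Y_def by auto
      then have "finite T" using fin_sub unfolding H_def by auto
      then show ?thesis using T i unfolding H_def W_def by auto
    qed
  qed
  have d1: "H i \<inter> X = {}"
  proof (intro equalityI subsetI)
    fix S assume "S \<in> H i \<inter> X"
    then obtain T p where T: "T \<in> H (i-1)" "p \<in> U - T" "S = insert p T" "cd m S" unfolding X_def H_def by auto
    then have "finite T" "cd m T" "p < n" using fin_sub unfolding H_def U_def by auto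
    then have "\<not> cd m (flip T p)" using flip_notcd n_def by blast
    moreover have "flip T p = S" using T unfolding flip_def by auto
    ultimately show "S \<in> {}" using T by simp
  qed simp
  have d2: "(H i \<union> X) \<inter> Y = {}"
  proof (intro equalityI subsetI)
    fix S assume S: "S \<in> (H i \<union> X) \<inter> Y"
    then obtain T p where T: "T \<in> H (i+1)" "p \<in> T" "S = T - {p}" unfolding Y_def by auto
    then have fT: "finite T" "cd m T" "p < n" using fin_sub unfolding H_def U_def by auto
    have fl1: "flip S p = T" using T unfolding flip_def by auto
    have fS: "finite S" using fT T by simp
    show "S \<in> {}"
    proof (cases "S \<in> H i")
      case True
      then have "\<not> cd m (flip S p)" using flip_notcd fS fT(3) n_def unfolding H_def by blast
      then show ?thesis using fl1 fT by simp
    next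
      case False
      then have "S \<in> X" using S by blast
      then obtain T' q where T': "T' \<in> H (i-1)" "q \<in> U - T'" "S = insert q T'" unfolding X_def by auto
      then have "cd m T'" "q < n" unfolding H_def U_def by auto
      moreover have "flip S q = T'" using T' unfolding flip_def by auto
      ultimately have "q = p" using flip_uniq[OF fS, of q m p] fl1 fT n_def by auto
      then show ?thesis using T T' by auto
    qed
  qed simp
  have injX: "inj_on (\<lambda>(T,p). insert p T) (Sigma (H (i-1)) (\<lambda>T. U - T))"
  proof (rule inj_onI)
    fix x y assume x: "x \<in> Sigma (H (i-1)) (\<lambda>T. U - T)" and y: "y \<in> Sigma (H (i-1)) (\<lambda>T. U - T)"
      and e: "(\<lambda>(T,p). insert p T) x = (\<lambda>(T,p). insert p T) y"
    obtain T p where xT: "x = (T,p)" by fastforce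
    obtain T' p' where yT: "y = (T',p')" by fastforce
    have a: "T \<in> H (i-1)" "p \<in> U - T" "T' \<in> H (i-1)" "p' \<in> U - T'" "insert p T = insert p' T'"
      using x y e xT yT by auto
    define S where "S = insert p T"
    have fS: "finite S" using a fin_sub unfolding S_def H_def by auto
    have f1: "flip S p = T" "flip S p' = T'" using a unfolding S_def flip_def by auto
    moreover have "cd m T" "cd m T'" "p < n" "p' < n" using a unfolding H_def U_def by auto
    ultimately have "p = p'" using flip_uniq[OF fS, of p m p'] n_def by auto
    then show "x = y" using f1 xT yT by simp
  qed
  have injY: "inj_on (\<lambda>(T,p). T - {p}) (Sigma (H (i+1)) (\<lambda>T. T))"
  proof (rule inj_onI)
    fix x y assume x: "x \<in> Sigma (H (i+1)) (\<lambda>T. T)" and y: "y \<in> Sigma (H (i+1)) (\<lambda>T. T)"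
      and e: "(\<lambda>(T,p). T - {p}) x = (\<lambda>(T,p). T - {p}) y"
    obtain T p where xT: "x = (T,p)" by fastforce
    obtain T' p' where yT: "y = (T',p')" by fastforce
    have a: "T \<in> H (i+1)" "p \<in> T" "T' \<in> H (i+1)" "p' \<in> T'" "T - {p} = T' - {p'}"
      using x y e xT yT by auto
    define S where "S = T - {p}"
    have fS: "finite S" using a fin_sub unfolding S_def H_def by auto
    have f1: "flip S p = T" "flip S p' = T'" using a unfolding S_def flip_def by auto
    moreover have "cd m T" "cd m T'" "p < n" "p' < n" using a unfolding H_def U_def by auto
    ultimately have "p = p'" using flip_uniq[OF fS, of p m p'] n_def by auto
    then show "x = y" using f1 xT yT by simp
  qed
  have cX: "card X = card (H (i-1)) * (n - (i-1))"
  proof -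
    have "card X = card (Sigma (H (i-1)) (\<lambda>T. U - T))" unfolding X_def using card_image[OF injX] .
    also have "\<dots> = (\<Sum>T\<in>H (i-1). card (U - T))" by (rule card_SigmaI) (auto simp: finH fU)
    also have "\<dots> = (\<Sum>T\<in>H (i-1). n - (i-1))"
    proof (rule sum.cong)
      fix T assume "T \<in> H (i-1)"
      then have "T \<subseteq> U" "card T = i - 1" unfolding H_def by auto
      then show "card (U - T) = n - (i-1)" using card_Diff_subset[of T U] fin_sub fU by (simp add: U_def)
    qed simp
    finally show ?thesis by simp
  qed
  have cY: "card Y = card (H (i+1)) * (i+1)"
  proof -
    have "card Y = card (Sigma (H (i+1)) (\<lambda>T. T))" unfolding Y_def using card_image[OF injY] .
    also have "\<dots> = (\<Sum>T\<in>H (i+1). card T)" by (rule card_SigmaI) (auto simp: finH H_def fin_sub)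
    also have "\<dots> = (\<Sum>T\<in>H (i+1). i+1)" by (rule sum.cong) (auto simp: H_def)
    finally show ?thesis by simp
  qed
  have fX: "finite X" unfolding X_def by (auto simp: finH fU)
  have fY: "finite Y" unfolding Y_def by (rule finite_imageI, rule finite_SigmaI) (auto simp: finH H_def fin_sub)
  have "card W = card (H i) + card X + card Y"
    unfolding WX using card_Un_disjoint[OF _ fY d2] card_Un_disjoint[OF finH fX d1] finH fX by simp
  then show ?thesis using cardW cX cY AH unfolding n_def by (simp add: mult.commute)
qed

lemma bstep: "(k+1) * (n choose (k+1)) = (n - k) * (n choose k)"
  using binomial_absorption[of k n] binomial_absorb_comp[of n k] by simp

definition ee :: "nat \<Rightarrow> nat \<Rightarrow> int" where
  "ee N i = (if even i then (-1)^(i div 2) else (-1)^(i div 2 + 1)) * int (N choose (i div 2))"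

definition XX :: "nat \<Rightarrow> nat \<Rightarrow> int" where
  "XX N i = int ((2*N+1) choose i) + int (2*N+1) * ee N i"

lemma b_rec:
  assumes "1 \<le> i"
  shows "int (n choose i) + int (i+1) * int (n choose (i+1)) + int (n+1-i) * int (n choose (i-1))
         = int (n+1) * int (n choose i)"
proof -
  have 1: "(i+1) * (n choose (i+1)) = (n - i) * (n choose i)" by (rule bstep)
  have 2: "(n+1-i) * (n choose (i-1)) = i * (n choose i)"
    using bstep[of "i-1" n] assms by (simp add: mult.commute)
  have "int (i+1) * int (n choose (i+1)) = int (n - i) * int (n choose i)"
    using 1 by (metis of_nat_mult)
  moreover have "int (n+1-i) * int (n choose (i-1)) = int i * int (n choose i)"
    using 2 by (metis of_nat_mult)
  moreover have "int (n choose i) + int (n - i) * int (n choose i) + int i * int (n choose i)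
       = int (n+1) * int (n choose i)"
  proof (cases "i \<le> n")
    case True then show ?thesis by (simp add: of_nat_diff algebra_simps)
  next
    case False
    then have z: "n choose i = 0" by simp
    show ?thesis by (simp only: z)
  qed
  ultimately show ?thesis by simp
qed

lemma bstep_int: "int (k+1) * int (n choose (k+1)) = int (n - k) * int (n choose k)"
  using bstep by (metis of_nat_mult)

lemma e_rec:
  assumes "1 \<le> i"
  shows "ee N i + int (i+1) * ee N (i+1) + int (2*N+2-i) * ee N (i-1) = 0"
proof (cases "even i")
  case True
  then obtain k where k: "i = 2*k" by blast
  with assms have k1: "k \<ge> 1" by simp
  have a: "ee N i = (-1)^k * int (N choose k)" using k by (simp add: ee_def)
  have b: "ee N (i+1) = (-1)^(k+1) * int (N choose k)" using k by (simp add: ee_def)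
  have c: "ee N (i-1) = (-1)^k * int (N choose (k-1))"
  proof -
    have "i - 1 = 2*(k-1) + 1" using k k1 by simp
    then have "ee N (i-1) = (-1)^(k-1+1) * int (N choose (k-1))" unfolding ee_def by simp
    then show ?thesis using k1 by simp
  qed
  have s: "int k * int (N choose k) = int (N - (k-1)) * int (N choose (k-1))"
    using bstep_int[of "k-1" N] k1 by simp
  have t: "int (2*N+2-i) * int (N choose (k-1)) = 2 * int (N - (k-1)) * int (N choose (k-1))"
  proof (cases "k - 1 \<le> N")
    case True then show ?thesis using k k1 by (simp add: of_nat_diff)
  next
    case False then show ?thesis by simp
  qed
  have "ee N i + int (i+1) * ee N (i+1) + int (2*N+2-i) * ee N (i-1)
      = (-1)^k * (int (N choose k) - int (2*k+1) * int (N choose k) + int (2*N+2-i) * int (N choose (k-1)))"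
    by (simp only: a b c) (simp add: k algebra_simps)
  also have "\<dots> = (-1)^k * (- 2 * (int k * int (N choose k)) + int (2*N+2-i) * int (N choose (k-1)))"
    by (simp add: algebra_simps)
  also have "\<dots> = 0" unfolding s t by simp
  finally show ?thesis .
next
  case False
  then obtain k where k: "i = 2*k+1" using oddE by blast
  have a: "ee N i = (-1)^(k+1) * int (N choose k)" using k by (simp add: ee_def)
  have b: "ee N (i+1) = (-1)^(k+1) * int (N choose (k+1))" using k by (simp add: ee_def)
  have c: "ee N (i-1) = (-1)^k * int (N choose k)" using k by (simp add: ee_def)
  have s: "int (k+1) * int (N choose (k+1)) = int (N - k) * int (N choose k)"
    by (rule bstep_int)
  have t: "int (2*N+2-i) * int (N choose k) = (2 * int (N - k) + 1) * int (N choose k)"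
  proof (cases "k \<le> N")
    case True then show ?thesis using k by (simp add: of_nat_diff)
  next
    case False then show ?thesis by simp
  qed
  have "ee N i + int (i+1) * ee N (i+1) + int (2*N+2-i) * ee N (i-1)
      = (-1)^(k+1) * (int (N choose k) + 2 * (int (k+1) * int (N choose (k+1))) - int (2*N+2-i) * int (N choose k))"
    by (simp only: a b c) (simp add: k algebra_simps)
  also have "\<dots> = 0" unfolding s t by (simp add: algebra_simps)
  finally show ?thesis .
qed

lemma XX_rec:
  assumes "1 \<le> i"
  shows "XX N i + int (i+1) * XX N (i+1) + int (2*N+2-i) * XX N (i-1) = int (2*N+2) * int ((2*N+1) choose i)"
proof -
  have "XX N i + int (i+1) * XX N (i+1) + int (2*N+2-i) * XX N (i-1)
     = (int ((2*N+1) choose i) + int (i+1) * int ((2*N+1) choose (i+1)) + int ((2*N+1)+1-i) * int ((2*N+1) choose (i-1)))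
       + int (2*N+1) * (ee N i + int (i+1) * ee N (i+1) + int (2*N+2-i) * ee N (i-1))"
    unfolding XX_def by (simp add: algebra_simps)
  also have "\<dots> = int (2*N+2) * int ((2*N+1) choose i)"
    unfolding b_rec[OF assms] e_rec[OF assms] by simp
  finally show ?thesis .
qed

lemma lin_aux:
  fixes M c a0 a1 a2 x0 x1 x2 d J :: int
  assumes "c = a1 + J*a2 + d*a0" "M*a1 = x1" "M*a0 = x0" "x1 + J*x2 + d*x0 = M*c"
  shows "J*(M*a2) = J*x2"
proof -
  have "M*c = M*a1 + J*(M*a2) + d*(M*a0)" by (simp add: assms(1) algebra_simps)
  then have "M*c = x1 + J*(M*a2) + d*x0" by (simp only: assms(2,3))
  then show ?thesis using assms(4) by linarith
qed

lemma A_formula: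
  assumes m: "m \<ge> 1" and N: "N = 2^(m-1) - 1"
  shows "i \<le> 2^m - 1 \<Longrightarrow> int (2^m) * int (Acnt m i) = XX N i"
proof (induction i rule: less_induct)
  case (less i)
  obtain P where P: "(2::nat)^(m-1) = P" by simp
  have P1: "P \<ge> 1" using P by auto
  have mP: "(2::nat)^m = 2*P" using m P by (cases m) auto
  have nN: "2^m - 1 = 2*N+1" and nN2: "(2::nat)^m = 2*N+2" using mP P1 N P by auto
  consider "i = 0" | "i = 1" | j where "i = j + 2" by (metis One_nat_def add_2_eq_Suc' not0_implies_Suc)
  then show ?case
  proof cases
    case 1 then show ?thesis by (simp add: Acnt_0 XX_def ee_def nN2)
  next
    case 2 then show ?thesis using Acnt_1[of m] by (simp add: XX_def ee_def)
  next
    case 3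
    have r: "(2*N+1) choose (j+1) = Acnt m (j+1) + (j+2) * Acnt m (j+2) + ((2*N+1) - j) * Acnt m j"
      using Acnt_rec[of "j+1" m] unfolding nN by simp
    have ri: "int ((2*N+1) choose (j+1)) = int (Acnt m (j+1)) + int (j+2) * int (Acnt m (j+2)) + int ((2*N+1) - j) * int (Acnt m j)"
      using arg_cong[OF r, of int] by (simp only: of_nat_add of_nat_mult)
    have l1: "j+1 < i" "j+1 \<le> 2^m - 1" "j < i" "j \<le> 2^m - 1" using 3 less.prems by auto
    have ih1: "int (2*N+2) * int (Acnt m (j+1)) = XX N (j+1)" using less.IH[OF l1(1,2)] unfolding nN2 .
    have ih0: "int (2*N+2) * int (Acnt m j) = XX N j" using less.IH[OF l1(3,4)] unfolding nN2 .
    have xr: "XX N (j+1) + int (j+2) * XX N (j+2) + int (2*N+1-j) * XX N j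
              = int (2*N+2) * int ((2*N+1) choose (j+1))"
      using XX_rec[of "j+1" N] by (simp add: numeral_2_eq_2)
    have "int (j+2) * (int (2*N+2) * int (Acnt m (j+2))) = int (j+2) * XX N (j+2)"
      by (rule lin_aux[OF ri ih1 ih0 xr])
    then show ?thesis using 3 nN2 by simp
  qed
qed



lemma choose_prod: "int (n choose k) * fact k = (\<Prod>i<k. (int n - int i))"
proof (induction k)
  case 0 then show ?case by simp
next
  case (Suc k)
  have "int (n choose Suc k) * fact (Suc k) = int ((k+1) * (n choose (k+1))) * fact k"
    by (simp add: algebra_simps)
  also have "\<dots> = int ((n - k) * (n choose k)) * fact k"
    by (simp only: bstep)
  also have "\<dots> = int (n - k) * (int (n choose k) * fact k)"
    by simp
  also have "\<dots> = (int n - int k) * (\<Prod>i<k. (int n - int i))"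
  proof (cases "k \<le> n")
    case True then show ?thesis using Suc.IH by (simp add: of_nat_diff)
  next
    case False
    then have "n \<in> {..<k}" by simp
    then have "(\<Prod>i<k. (int n - int i)) = 0" by (intro prod_zero) auto
    then show ?thesis using Suc.IH by simp
  qed
  also have "\<dots> = (\<Prod>i<Suc k. (int n - int i))" by (simp add: lessThan_Suc algebra_simps)
  finally show ?case .
qed

lemma Q0: "40320 * XX (t+15) 0 = 1290240 + 80640*int t"
proof -
  have b: "int ((2*(t+15)+1) choose 0) * fact 0 = (\<Prod>i<0. (int (2*(t+15)+1) - int i))" by (rule choose_prod)
  have c: "int ((t+15) choose 0) * fact 0 = (\<Prod>i<0. (int (t+15) - int i))" by (rule choose_prod)
  have e: "ee (t+15) 0 = int ((t+15) choose 0)" by (simp add: ee_def)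
  have "40320 * XX (t+15) 0 = 40320 * (int ((2*(t+15)+1) choose 0) * fact 0) + (40320) * int (2*(t+15)+1) * (int ((t+15) choose 0) * fact 0)"
    unfolding XX_def e by (simp add: fact_numeral algebra_simps)
  also have "\<dots> = 1290240 + 80640*int t"
    unfolding b c by (simp add: lessThan_nat_numeral algebra_simps)
  finally show ?thesis .
qed

lemma Q1: "40320 * XX (t+15) 1 = 0"
proof -
  have b: "int ((2*(t+15)+1) choose 1) * fact 1 = (\<Prod>i<1. (int (2*(t+15)+1) - int i))" by (rule choose_prod)
  have c: "int ((t+15) choose 0) * fact 0 = (\<Prod>i<0. (int (t+15) - int i))" by (rule choose_prod)
  have e: "ee (t+15) 1 = - int ((t+15) choose 0)" by (simp add: ee_def)
  have "40320 * XX (t+15) 1 = 40320 * (int ((2*(t+15)+1) choose 1) * fact 1) + (-40320) * int (2*(t+15)+1) * (int ((t+15) choose 0) * fact 0)"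
    unfolding XX_def e by (simp add: fact_numeral algebra_simps)
  also have "\<dots> = 0"
    unfolding b c by (simp add: lessThan_nat_numeral algebra_simps)
  finally show ?thesis .
qed

lemma Q2: "40320 * XX (t+15) 2 = 0"
proof -
  have b: "int ((2*(t+15)+1) choose 2) * fact 2 = (\<Prod>i<2. (int (2*(t+15)+1) - int i))" by (rule choose_prod)
  have c: "int ((t+15) choose 1) * fact 1 = (\<Prod>i<1. (int (t+15) - int i))" by (rule choose_prod)
  have e: "ee (t+15) 2 = - int ((t+15) choose 1)" by (simp add: ee_def)
  have "40320 * XX (t+15) 2 = 20160 * (int ((2*(t+15)+1) choose 2) * fact 2) + (-40320) * int (2*(t+15)+1) * (int ((t+15) choose 1) * fact 1)"
    unfolding XX_def e by (simp add: fact_numeral algebra_simps)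
  also have "\<dots> = 0"
    unfolding b c by (simp add: lessThan_nat_numeral algebra_simps)
  finally show ?thesis .
qed

lemma Q3: "40320 * XX (t+15) 3 = 199987200 + 38734080*int t + 2499840*(int t*int t) + 53760*(int t*int t*int t)"
proof -
  have b: "int ((2*(t+15)+1) choose 3) * fact 3 = (\<Prod>i<3. (int (2*(t+15)+1) - int i))" by (rule choose_prod)
  have c: "int ((t+15) choose 1) * fact 1 = (\<Prod>i<1. (int (t+15) - int i))" by (rule choose_prod)
  have e: "ee (t+15) 3 = int ((t+15) choose 1)" by (simp add: ee_def)
  have "40320 * XX (t+15) 3 = 6720 * (int ((2*(t+15)+1) choose 3) * fact 3) + (40320) * int (2*(t+15)+1) * (int ((t+15) choose 1) * fact 1)"
    unfolding XX_def e by (simp add: fact_numeral algebra_simps)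
  also have "\<dots> = 199987200 + 38734080*int t + 2499840*(int t*int t) + 53760*(int t*int t*int t)"
    unfolding b c by (simp add: lessThan_nat_numeral algebra_simps)
  finally show ?thesis .
qed

lemma Q4: "40320 * XX (t+15) 4 = 1399910400 + 371132160*int t + 36865920*(int t*int t) + 1626240*(int t*int t*int t) + 26880*(int t*int t*int t*int t)"
proof -
  have b: "int ((2*(t+15)+1) choose 4) * fact 4 = (\<Prod>i<4. (int (2*(t+15)+1) - int i))" by (rule choose_prod)
  have c: "int ((t+15) choose 2) * fact 2 = (\<Prod>i<2. (int (t+15) - int i))" by (rule choose_prod)
  have e: "ee (t+15) 4 = int ((t+15) choose 2)" by (simp add: ee_def)
  have "40320 * XX (t+15) 4 = 1680 * (int ((2*(t+15)+1) choose 4) * fact 4) + (20160) * int (2*(t+15)+1) * (int ((t+15) choose 2) * fact 2)"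
    unfolding XX_def e by (simp add: fact_numeral algebra_simps)
  also have "\<dots> = 1399910400 + 371132160*int t + 36865920*(int t*int t) + 1626240*(int t*int t*int t) + 26880*(int t*int t*int t*int t)"
    unfolding b c by (simp add: lessThan_nat_numeral algebra_simps)
  finally show ?thesis .
qed

lemma Q5: "40320 * XX (t+15) 5 = 6719569920 + 2341398528*int t + 325409280*(int t*int t) + 22552320*(int t*int t*int t) + 779520*(int t*int t*int t*int t) + 10752*(int t*int t*int t*int t*int t)"
proof -
  have b: "int ((2*(t+15)+1) choose 5) * fact 5 = (\<Prod>i<5. (int (2*(t+15)+1) - int i))" by (rule choose_prod)
  have c: "int ((t+15) choose 2) * fact 2 = (\<Prod>i<2. (int (t+15) - int i))" by (rule choose_prod)
  have e: "ee (t+15) 5 = - int ((t+15) choose 2)" by (simp add: ee_def)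
  have "40320 * XX (t+15) 5 = 336 * (int ((2*(t+15)+1) choose 5) * fact 5) + (-20160) * int (2*(t+15)+1) * (int ((t+15) choose 2) * fact 2)"
    unfolding XX_def e by (simp add: fact_numeral algebra_simps)
  also have "\<dots> = 6719569920 + 2341398528*int t + 325409280*(int t*int t) + 22552320*(int t*int t*int t) + 779520*(int t*int t*int t*int t) + 10752*(int t*int t*int t*int t*int t)"
    unfolding b c by (simp add: lessThan_nat_numeral algebra_simps)
  finally show ?thesis .
qed

lemma Q6: "40320 * XX (t+15) 6 = 29118136320 + 12385916928*int t + 2190573056*(int t*int t) + 206196480*(int t*int t*int t) + 10895360*(int t*int t*int t*int t) + 306432*(int t*int t*int t*int t*int t) + 3584*(int t*int t*int t*int t*int t*int t)"
proof -
  have b: "int ((2*(t+15)+1) choose 6) * fact 6 = (\<Prod>i<6. (int (2*(t+15)+1) - int i))" by (rule choose_prod)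
  have c: "int ((t+15) choose 3) * fact 3 = (\<Prod>i<3. (int (t+15) - int i))" by (rule choose_prod)
  have e: "ee (t+15) 6 = - int ((t+15) choose 3)" by (simp add: ee_def)
  have "40320 * XX (t+15) 6 = 56 * (int ((2*(t+15)+1) choose 6) * fact 6) + (-6720) * int (2*(t+15)+1) * (int ((t+15) choose 3) * fact 3)"
    unfolding XX_def e by (simp add: fact_numeral algebra_simps)
  also have "\<dots> = 29118136320 + 12385916928*int t + 2190573056*(int t*int t) + 206196480*(int t*int t*int t) + 10895360*(int t*int t*int t*int t) + 306432*(int t*int t*int t*int t*int t) + 3584*(int t*int t*int t*int t*int t*int t)"
    unfolding b c by (simp add: lessThan_nat_numeral algebra_simps)
  finally show ?thesis .
qed

lemma Q7: "40320 * XX (t+15) 7 = 106593177600 + 53444117760*int t + 11483792768*(int t*int t) + 1370580736*(int t*int t*int t) + 98107520*(int t*int t*int t*int t) + 4211200*(int t*int t*int t*int t*int t) + 100352*(int t*int t*int t*int t*int t*int t) + 1024*(int t*int t*int t*int t*int t*int t*int t)"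
proof -
  have b: "int ((2*(t+15)+1) choose 7) * fact 7 = (\<Prod>i<7. (int (2*(t+15)+1) - int i))" by (rule choose_prod)
  have c: "int ((t+15) choose 3) * fact 3 = (\<Prod>i<3. (int (t+15) - int i))" by (rule choose_prod)
  have e: "ee (t+15) 7 = int ((t+15) choose 3)" by (simp add: ee_def)
  have "40320 * XX (t+15) 7 = 8 * (int ((2*(t+15)+1) choose 7) * fact 7) + (6720) * int (2*(t+15)+1) * (int ((t+15) choose 3) * fact 3)"
    unfolding XX_def e by (simp add: fact_numeral algebra_simps)
  also have "\<dots> = 106593177600 + 53444117760*int t + 11483792768*(int t*int t) + 1370580736*(int t*int t*int t) + 98107520*(int t*int t*int t*int t) + 4211200*(int t*int t*int t*int t*int t) + 100352*(int t*int t*int t*int t*int t*int t) + 1024*(int t*int t*int t*int t*int t*int t*int t)"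
    unfolding b c by (simp add: lessThan_nat_numeral algebra_simps)
  finally show ?thesis .
qed

lemma Q8: "40320 * XX (t+15) 8 = 319779532800 + 186980647680*int t + 47812407744*(int t*int t) + 6982690400*(int t*int t*int t) + 636967744*(int t*int t*int t*int t) + 37160480*(int t*int t*int t*int t*int t) + 1353856*(int t*int t*int t*int t*int t*int t) + 28160*(int t*int t*int t*int t*int t*int t*int t) + 256*(int t*int t*int t*int t*int t*int t*int t*int t)"
proof -
  have b: "int ((2*(t+15)+1) choose 8) * fact 8 = (\<Prod>i<8. (int (2*(t+15)+1) - int i))" by (rule choose_prod)
  have c: "int ((t+15) choose 4) * fact 4 = (\<Prod>i<4. (int (t+15) - int i))" by (rule choose_prod)
  have e: "ee (t+15) 8 = int ((t+15) choose 4)" by (simp add: ee_def)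
  have "40320 * XX (t+15) 8 = 1 * (int ((2*(t+15)+1) choose 8) * fact 8) + (1680) * int (2*(t+15)+1) * (int ((t+15) choose 4) * fact 4)"
    unfolding XX_def e by (simp add: fact_numeral algebra_simps)
  also have "\<dots> = 319779532800 + 186980647680*int t + 47812407744*(int t*int t) + 6982690400*(int t*int t*int t) + 636967744*(int t*int t*int t*int t) + 37160480*(int t*int t*int t*int t*int t) + 1353856*(int t*int t*int t*int t*int t*int t) + 28160*(int t*int t*int t*int t*int t*int t*int t) + 256*(int t*int t*int t*int t*int t*int t*int t*int t)"
    unfolding b c by (simp add: lessThan_nat_numeral algebra_simps)
  finally show ?thesis .
qed

lemma R3: "XX (t+15) 0 * XX (t+15) 4 \<le> XX (t+15) 3 ^ 2"
proof -
  have "40320 * 40320 * (XX (t+15) 3 ^ 2 - XX (t+15) 0 * XX (t+15) 4)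
      = (40320 * XX (t+15) 3) * (40320 * XX (t+15) 3) - (40320 * XX (t+15) 0) * (40320 * XX (t+15) 4)"
    by (simp add: power2_eq_square algebra_simps)
  also have "\<dots> = int (38188659769344000 + 14900902074777600*t + 2422706975539200*(t*t) + 210089521152000*(t*t*t) + 10248066662400*(t*t*t*t) + 266615193600*(t*t*t*t*t) + 2890137600*(t*t*t*t*t*t))"
    unfolding Q3 Q0 Q4 by (simp add: algebra_simps)
  finally have "0 \<le> 40320 * 40320 * (XX (t+15) 3 ^ 2 - XX (t+15) 0 * XX (t+15) 4)" by simp
  then show ?thesis by simp
qed

lemma R4: "XX (t+15) 3 * XX (t+15) 5 \<le> XX (t+15) 4 ^ 2"
proof -
  have "40320 * 40320 * (XX (t+15) 4 ^ 2 - XX (t+15) 3 * XX (t+15) 5)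
      = (40320 * XX (t+15) 4) * (40320 * XX (t+15) 4) - (40320 * XX (t+15) 3) * (40320 * XX (t+15) 5)"
    by (simp add: power2_eq_square algebra_simps)
  also have "\<dots> = int (615921154523136000 + 310577446571212800*t + 68389591487938560*(t*t) + 8588467428065280*(t*t*t) + 672673059717120*(t*t*t*t) + 33642285465600*(t*t*t*t*t) + 1049011568640*(t*t*t*t*t*t) + 18641387520*(t*t*t*t*t*t*t) + 144506880*(t*t*t*t*t*t*t*t))"
    unfolding Q4 Q3 Q5 by (simp add: algebra_simps)
  finally have "0 \<le> 40320 * 40320 * (XX (t+15) 4 ^ 2 - XX (t+15) 3 * XX (t+15) 5)" by simp
  then show ?thesis by simp
qed

lemma R5: "XX (t+15) 4 * XX (t+15) 6 \<le> XX (t+15) 5 ^ 2"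
proof -
  have "40320 * 40320 * (XX (t+15) 5 ^ 2 - XX (t+15) 4 * XX (t+15) 6)
      = (40320 * XX (t+15) 5) * (40320 * XX (t+15) 5) - (40320 * XX (t+15) 4) * (40320 * XX (t+15) 6)"
    by (simp add: power2_eq_square algebra_simps)
  also have "\<dots> = int (4389838046783078400 + 3320531490302853120*t + 1118482895828680704*(t*t) + 221289393265704960*(t*t*t) + 28513882631700480*(t*t*t*t) + 2502750275665920*(t*t*t*t*t) + 151663568781312*(t*t*t*t*t*t) + 6269503242240*(t*t*t*t*t*t*t) + 169289809920*(t*t*t*t*t*t*t*t) + 2697461760*(t*t*t*t*t*t*t*t*t) + 19267584*(t*t*t*t*t*t*t*t*t*t))"
    unfolding Q5 Q4 Q6 by (simp add: algebra_simps)
  finally have "0 \<le> 40320 * 40320 * (XX (t+15) 5 ^ 2 - XX (t+15) 4 * XX (t+15) 6)" by simp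
  then show ?thesis by simp
qed

lemma R6: "XX (t+15) 5 * XX (t+15) 7 \<le> XX (t+15) 6 ^ 2"
proof -
  have "40320 * 40320 * (XX (t+15) 6 ^ 2 - XX (t+15) 5 * XX (t+15) 7)
      = (40320 * XX (t+15) 6) * (40320 * XX (t+15) 6) - (40320 * XX (t+15) 5) * (40320 * XX (t+15) 7)"
    by (simp add: power2_eq_square algebra_simps)
  also have "\<dots> = int (131605552871925350400 + 112611039886882897920*t + 43995211593753821184*(t*t) + 10379642318372339712*(t*t*t) + 1647351259354759168*(t*t*t*t) + 185321447795097600*(t*t*t*t*t) + 15154984016248832*(t*t*t*t*t*t) + 907845933367296*(t*t*t*t*t*t*t) + 39542644506624*(t*t*t*t*t*t*t*t) + 1221434081280*(t*t*t*t*t*t*t*t*t) + 25399721984*(t*t*t*t*t*t*t*t*t*t) + 319291392*(t*t*t*t*t*t*t*t*t*t*t) + 1835008*(t*t*t*t*t*t*t*t*t*t*t*t))"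
    unfolding Q6 Q5 Q7 by (simp add: algebra_simps)
  finally have "0 \<le> 40320 * 40320 * (XX (t+15) 6 ^ 2 - XX (t+15) 5 * XX (t+15) 7)" by simp
  then show ?thesis by simp
qed

lemma R7: "XX (t+15) 6 * XX (t+15) 8 \<le> XX (t+15) 7 ^ 2"
proof -
  have "40320 * 40320 * (XX (t+15) 7 ^ 2 - XX (t+15) 6 * XX (t+15) 8)
      = (40320 * XX (t+15) 7) * (40320 * XX (t+15) 7) - (40320 * XX (t+15) 6) * (40320 * XX (t+15) 8)"
    by (simp add: power2_eq_square algebra_simps)
  also have "\<dots> = int (2050721482448830464000 + 1988265955250405376000*t + 895826243029506785280*(t*t) + 248615833430985474048*(t*t*t) + 47481863967329075200*(t*t*t*t) + 6601711108709842944*(t*t*t*t*t) + 689110546437332992*(t*t*t*t*t*t) + 54862117548048384*(t*t*t*t*t*t*t) + 3347566725038080*(t*t*t*t*t*t*t*t) + 155792876961792*(t*t*t*t*t*t*t*t*t) + 5443645792256*(t*t*t*t*t*t*t*t*t*t) + 138481287168*(t*t*t*t*t*t*t*t*t*t*t) + 2424504320*(t*t*t*t*t*t*t*t*t*t*t*t) + 26148864*(t*t*t*t*t*t*t*t*t*t*t*t*t) + 131072*(t*t*t*t*t*t*t*t*t*t*t*t*t*t))"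
    unfolding Q7 Q6 Q8 by (simp add: algebra_simps)
  finally have "0 \<le> 40320 * 40320 * (XX (t+15) 7 ^ 2 - XX (t+15) 6 * XX (t+15) 8)" by simp
  then show ?thesis by simp
qed



lemma abstract_ineq:
  fixes b0 b1 b2 e0 e1 e2 c0 c1 c2 n i K :: int
  assumes f0: "(n+1-i)*b0 = i*b1" and f2: "(i+1)*b2 = (n-i)*b1"
    and i0: "0 \<le> i" and iN: "i \<le> n"
    and a0: "\<bar>e0\<bar> \<le> c0" and a1: "\<bar>e1\<bar> \<le> c1" and a2: "\<bar>e2\<bar> \<le> c2"
    and s02: "e0*e2 \<le> 0"
    and k0: "K*c0 \<le> b1" and k1: "K*c1 \<le> b1" and k2: "K*c2 \<le> b1"
    and K: "K = (n+2)^2" and n0: "0 \<le> n" and b1: "0 \<le> b1"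
  shows "(b0 + n*e0)*(b2+n*e2) \<le> (b1+n*e1)^2"
proof -
  define P where "P = (i+1)*(n+1-i)"
  have P0: "P > 0" unfolding P_def using i0 iN by simp
  have K0: "K > 0" unfolding K using n0 by simp
  have b0: "0 \<le> b0"
  proof -
    have "0 \<le> (n+1-i)*b0" unfolding f0 using i0 b1 by simp
    then show ?thesis using iN by (simp add: zero_le_mult_iff)
  qed
  have b2: "0 \<le> b2"
  proof -
    have "0 \<le> (i+1)*b2" unfolding f2 using iN b1 by simp
    then show ?thesis using i0 by (simp add: zero_le_mult_iff)
  qed
  have Pb0: "P*b0 = (i+1)*i*b1" unfolding P_def using f0 by (metis mult.assoc mult.commute)
  have Pb2: "P*b2 = (n+1-i)*(n-i)*b1" unfolding P_def using f2 by (metis mult.assoc mult.commute)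
  have s1: "P*(b1^2 - b0*b2) = (n+1)*b1^2"
  proof -
    have "P*(b0*b2) = ((n+1-i)*b0)*((i+1)*b2)" unfolding P_def by (simp add: algebra_simps)
    also have "\<dots> = i*(n-i)*b1^2" unfolding f0 f2 by (simp add: algebra_simps power2_eq_square)
    finally have "P*(b0*b2) = i*(n-i)*b1^2" .
    moreover have "P*b1^2 = (i+1)*(n+1-i)*b1^2" unfolding P_def by simp
    ultimately show ?thesis by (simp add: algebra_simps)
  qed
  have t1: "-(b0*c2) \<le> -(b0*e2)" using a2 b0 by (simp add: abs_le_iff mult_left_mono)
  have t2: "-(b2*c0) \<le> -(b2*e0)" using a0 b2 by (simp add: abs_le_iff mult_left_mono)
  have t3: "-(b1*c1) \<le> b1*e1" using a1 b1 by (smt (verit) abs_le_iff mult_left_mono mult_minus_right)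
  have T2: "-(2*b1*c1 + b0*c2 + b2*c0) \<le> 2*b1*e1 - b0*e2 - b2*e0" using t1 t2 t3 by linarith
  have T2P: "-(b1*(2*P*c1 + (i+1)*i*c2 + (n+1-i)*(n-i)*c0)) \<le> P*(2*b1*e1 - b0*e2 - b2*e0)"
  proof -
    have "P*(-(2*b1*c1 + b0*c2 + b2*c0)) \<le> P*(2*b1*e1 - b0*e2 - b2*e0)"
      using T2 P0 by (simp add: mult_left_mono)
    moreover have "P*(-(2*b1*c1 + b0*c2 + b2*c0)) = -(b1*(2*P*c1 + (i+1)*i*c2 + (n+1-i)*(n-i)*c0))"
    proof -
      have "P*(-(2*b1*c1 + b0*c2 + b2*c0)) = -(2*P*b1*c1 + (P*b0)*c2 + (P*b2)*c0)" by (simp add: algebra_simps)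
      also have "\<dots> = -(b1*(2*P*c1 + (i+1)*i*c2 + (n+1-i)*(n-i)*c0))" unfolding Pb0 Pb2 by (simp add: algebra_simps)
      finally show ?thesis .
    qed
    ultimately show ?thesis by simp
  qed
  have W: "2*P + (i+1)*i + (n+1-i)*(n-i) \<le> K"
  proof -
    have "K - (2*P + (i+1)*i + (n+1-i)*(n-i)) = n + 2" unfolding K P_def by (simp add: algebra_simps power2_eq_square)
    then show ?thesis using n0 by simp
  qed
  have KB: "K*(b1*(2*P*c1 + (i+1)*i*c2 + (n+1-i)*(n-i)*c0)) \<le> K*b1^2"
  proof -
    have "K*(2*P*c1 + (i+1)*i*c2 + (n+1-i)*(n-i)*c0) = 2*P*(K*c1) + (i+1)*i*(K*c2) + (n+1-i)*(n-i)*(K*c0)"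
      by (simp add: algebra_simps)
    also have "\<dots> \<le> 2*P*b1 + (i+1)*i*b1 + (n+1-i)*(n-i)*b1"
    proof -
      have "2*P*(K*c1) \<le> 2*P*b1" using k1 P0 by simp
      moreover have "(i+1)*i*(K*c2) \<le> (i+1)*i*b1" using k2 i0 by (simp add: mult_left_mono)
      moreover have "(n+1-i)*(n-i)*(K*c0) \<le> (n+1-i)*(n-i)*b1" using k0 iN by (simp add: mult_left_mono)
      ultimately show ?thesis by linarith
    qed
    also have "\<dots> = (2*P + (i+1)*i + (n+1-i)*(n-i))*b1" by (simp add: algebra_simps)
    also have "\<dots> \<le> K*b1" using W b1 by (simp add: mult_right_mono)
    finally have "K*(2*P*c1 + (i+1)*i*c2 + (n+1-i)*(n-i)*c0) \<le> K*b1" .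
    then have "b1*(K*(2*P*c1 + (i+1)*i*c2 + (n+1-i)*(n-i)*c0)) \<le> b1*(K*b1)" using b1 by (simp add: mult_left_mono)
    then show ?thesis by (simp add: algebra_simps power2_eq_square)
  qed
  have T3: "0 \<le> e1^2 - e0*e2" using s02 zero_le_power2[of e1] by linarith
  have D: "(b1+n*e1)^2 - (b0 + n*e0)*(b2+n*e2) = (b1^2 - b0*b2) + n*(2*b1*e1 - b0*e2 - b2*e0) + n^2*(e1^2 - e0*e2)"
    by (simp add: algebra_simps power2_eq_square)
  have "K*P*((b1+n*e1)^2 - (b0 + n*e0)*(b2+n*e2)) = K*(n+1)*b1^2 + n*(K*(P*(2*b1*e1 - b0*e2 - b2*e0))) + K*P*n^2*(e1^2 - e0*e2)"
    unfolding D using s1 by (simp add: algebra_simps)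
  also have "\<dots> \<ge> K*(n+1)*b1^2 - n*(K*b1^2) + 0"
  proof -
    have "K*(-(b1*(2*P*c1 + (i+1)*i*c2 + (n+1-i)*(n-i)*c0))) \<le> K*(P*(2*b1*e1 - b0*e2 - b2*e0))"
      using mult_left_mono[OF T2P, of K] K0 by simp
    then have "-(K*b1^2) \<le> K*(P*(2*b1*e1 - b0*e2 - b2*e0))" using KB by simp
    then have "n*(-(K*b1^2)) \<le> n*(K*(P*(2*b1*e1 - b0*e2 - b2*e0)))" using n0 by (rule mult_left_mono)
    moreover have "0 \<le> K*P*n^2*(e1^2 - e0*e2)" using K0 P0 T3 by simp
    ultimately show ?thesis by simp
  qed
  finally have F: "K*(n+1)*b1^2 - n*(K*b1^2) + 0 \<le> K*P*((b1+n*e1)^2 - (b0 + n*e0)*(b2+n*e2))" .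
  have "K*(n+1)*b1^2 - n*(K*b1^2) + 0 = K*b1^2" by (simp add: algebra_simps)
  moreover have "0 \<le> K*b1^2" using K0 by simp
  ultimately have "0 \<le> (K*P)*((b1+n*e1)^2 - (b0 + n*e0)*(b2+n*e2))" using F by (simp add: mult.assoc)
  moreover have "K*P > 0" using K0 P0 by simp
  ultimately have "0 \<le> (b1+n*e1)^2 - (b0 + n*e0)*(b2+n*e2)" by (simp add: zero_le_mult_iff)
  then show ?thesis by simp
qed

lemma ee_abs: "\<bar>ee N j\<bar> \<le> int (N choose (j div 2))"
  unfolding ee_def by (simp add: abs_mult)

lemma ee_sign: assumes "1 \<le> i" shows "ee N (i-1) * ee N (i+1) \<le> 0"
proof (cases "even i")
  case True
  then obtain k where k: "i = 2*k" by blast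
  with assms have k1: "k \<ge> 1" by simp
  have "i - 1 = 2*(k-1) + 1" using k k1 by simp
  then have a: "ee N (i-1) = (-1)^k * int (N choose (k-1))" unfolding ee_def using k1 by simp
  have b: "ee N (i+1) = (-1)^(k+1) * int (N choose k)" using k by (simp add: ee_def)
  have "ee N (i-1) * ee N (i+1) = - (((-1)^k)^2 * (int (N choose (k-1)) * int (N choose k)))"
    unfolding a b by (simp add: algebra_simps power2_eq_square)
  then show ?thesis by simp
next
  case False
  then obtain k where k: "i = 2*k+1" using oddE by blast
  have a: "ee N (i-1) = (-1)^k * int (N choose k)" using k by (simp add: ee_def)
  have b: "ee N (i+1) = (-1)^(k+1) * int (N choose (k+1))" using k by (simp add: ee_def)
  have "ee N (i-1) * ee N (i+1) = - (((-1)^k)^2 * (int (N choose k) * int (N choose (k+1))))"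
    unfolding a b by (simp add: algebra_simps power2_eq_square)
  then show ?thesis by simp
qed

lemma choose4_big:
  assumes "N \<ge> 15" shows "(2*N+3)^2 \<le> (N+1) choose 4"
proof -
  obtain t where t: "N = t + 15" using assms le_Suc_ex by (metis add.commute)
  have "int ((N+1) choose 4) * fact 4 = (\<Prod>i<4. (int (N+1) - int i))" by (rule choose_prod)
  then have "int ((N+1) choose 4) * 24 = (int t+16)*(int t+15)*(int t+14)*(int t+13)"
    unfolding t by (simp add: fact_numeral lessThan_nat_numeral algebra_simps)
  moreover have "(int t+16)*(int t+15)*(int t+14)*(int t+13) - 24 * (2*int t+33)^2
     = int (17544 + 8954*t + 1163*t*t + 58*t*t*t + t*t*t*t)"
    by (simp add: algebra_simps power2_eq_square)
  ultimately have "24 * (2*int t+33)^2 \<le> int ((N+1) choose 4) * 24" by linarith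
  then have "(2*int t+33)^2 \<le> int ((N+1) choose 4)" by simp
  then have "int ((2*t+33)^2) \<le> int ((N+1) choose 4)" by simp
  then have "(2*t+33)^2 \<le> (N+1) choose 4" by (simp only: of_nat_le_iff)
  moreover have "2*N+3 = 2*t+33" using t by simp
  ultimately show ?thesis by (simp only:)
qed

lemma choose_big:
  assumes "N \<ge> 15" "4 \<le> s" "s \<le> N - 3"
  shows "(2*N+3)^2 \<le> (N+1) choose s"
proof -
  have "(N+1) choose 4 \<le> (N+1) choose s"
  proof (cases "2*s \<le> N+1")
    case True then show ?thesis using assms by (intro binomial_mono) auto
  next
    case False
    have "(N+1) choose s = (N+1) choose (N+1-s)" using assms by (intro binomial_symmetric) auto
    moreover have "(N+1) choose 4 \<le> (N+1) choose (N+1-s)" using assms False by (intro binomial_mono) auto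
    ultimately show ?thesis by simp
  qed
  then show ?thesis using choose4_big[OF assms(1)] by linarith
qed

lemma vand_le: "a \<le> i \<Longrightarrow> (N choose a) * ((N+1) choose (i-a)) \<le> (2*N+1) choose i"
proof -
  assume a: "a \<le> i"
  have "(N choose a) * ((N+1) choose (i-a)) \<le> (\<Sum>k\<le>i. (N choose k) * ((N+1) choose (i - k)))"
    using a by (intro member_le_sum) auto
  also have "\<dots> = (N + (N+1)) choose i" by (rule vandermonde)
  also have "(N + (N+1)) choose i = (2*N+1) choose i" by (simp add: mult_2)
  finally show ?thesis .
qed

lemma Kc_le:
  assumes "N \<ge> 15" "8 \<le> i" "i \<le> N+1" "j \<in> {i-1, i, i+1}"
  shows "(2*N+3)^2 * (N choose (j div 2)) \<le> (2*N+1) choose i"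
proof -
  have s: "4 \<le> i - j div 2" "i - j div 2 \<le> N - 3" "j div 2 \<le> i" using assms by auto
  have "(2*N+3)^2 * (N choose (j div 2)) \<le> ((N+1) choose (i - j div 2)) * (N choose (j div 2))"
    using choose_big[OF assms(1) s(1,2)] by simp
  also have "\<dots> \<le> (2*N+1) choose i" using vand_le[OF s(3), of N] by (simp add: mult.commute)
  finally show ?thesis .
qed

lemma XX_ineq_gen:
  assumes N: "N \<ge> 15" and i: "8 \<le> i" "i \<le> N+1"
  shows "XX N (i-1) * XX N (i+1) \<le> XX N i ^ 2"
proof -
  define n where "n = 2*N+1"
  have f0: "(int n + 1 - int i) * int (n choose (i-1)) = int i * int (n choose i)"
  proof -
    have "int (i-1+1) * int (n choose (i-1+1)) = int (n - (i-1)) * int (n choose (i-1))" by (rule bstep_int)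
    moreover have "i - 1 + 1 = i" "int (n - (i-1)) = int n + 1 - int i" using i unfolding n_def by auto
    ultimately show ?thesis by simp
  qed
  have f2: "(int i + 1) * int (n choose (i+1)) = (int n - int i) * int (n choose i)"
  proof -
    have e: "int (n - i) = int n - int i" using i unfolding n_def by (simp add: of_nat_diff)
    show ?thesis using bstep_int[of i n] by (simp only: of_nat_add of_nat_1 e)
  qed
  have K: "\<And>j. j \<in> {i-1, i, i+1} \<Longrightarrow> (int n + 2)^2 * int (N choose (j div 2)) \<le> int (n choose i)"
  proof -
    fix j assume "j \<in> {i-1, i, i+1}"
    from Kc_le[OF N i this] have "int ((2*N+3)^2 * (N choose (j div 2))) \<le> int ((2*N+1) choose i)" by linarith
    then show "(int n + 2)^2 * int (N choose (j div 2)) \<le> int (n choose i)" unfolding n_def by (simp add: algebra_simps)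
  qed
  have main: "(int (n choose (i-1)) + int n * ee N (i-1)) * (int (n choose (i+1)) + int n * ee N (i+1))
      \<le> (int (n choose i) + int n * ee N i)^2"
    by (rule abstract_ineq[OF f0 f2 _ _ ee_abs ee_abs ee_abs ee_sign K K K refl])
       (use i n_def in auto)
  then show ?thesis unfolding XX_def n_def by simp
qed



lemma main_general:
  fixes A :: "nat \<Rightarrow> nat" and n :: nat
  assumes n7: "n \<ge> 7" and A0: "A 0 > 0" and A1: "A 1 = 0" and A2: "A 2 = 0"
    and An1: "A (n-1) = 0" and An2: "A (n-2) = 0" and An: "A n > 0"
    and Apos: "\<And>i. 3 \<le> i \<Longrightarrow> i \<le> n-3 \<Longrightarrow> A i > 0"
    and L3: "A 0 * A 4 \<le> A 3 ^ 2" and Ln3: "A (n-4) * A n \<le> A (n-3) ^ 2"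
    and Lmid: "\<And>i. 4 \<le> i \<Longrightarrow> i \<le> n-4 \<Longrightarrow> A (i-1) * A (i+1) \<le> A i ^ 2"
  shows "log_concave (filter (\<lambda>a. a \<noteq> 0) (map A [0..<n+1]))"
proof -
  have u0: "[0..<3] = [0,1,2::nat]" by (simp add: upt_rec)
  have u1: "[0..<n+1] = 0 # 1 # 2 # [3..<n+1]"
    using upt_add_eq_append[of 0 3 "n-2"] n7 u0 by simp
  have u2: "[3..<n+1] = [3..<n-2] @ [n-2..<n-2+3]"
  proof -
    have "n - 2 + 3 = n+1" "3 \<le> n-2" using n7 by auto
    then show ?thesis using upt_add_eq_append[of 3 "n-2" 3] by metis
  qed
  have u3': "[k..<k+3] = [k, k+1, k+2]" for k :: nat by (simp add: numeral_3_eq_3 upt_rec)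
  have e12: "n-2+1 = n-1" "n-2+2 = n" using n7 by auto
  have u3: "[n-2..<n-2+3] = [n-2, n-1, n]" using u3'[of "n-2", unfolded e12] .
  define ys where "ys = map A [3..<n-2]"
  have fys: "filter (\<lambda>a. a \<noteq> 0) ys = ys"
  proof (rule filter_True)
    show "\<forall>x\<in>set ys. x \<noteq> 0"
    proof
      fix x assume "x \<in> set ys"
      then obtain i where "3 \<le> i" "i < n - 2" "x = A i" unfolding ys_def by auto
      then show "x \<noteq> 0" using Apos[of i] by simp
    qed
  qed
  have L: "filter (\<lambda>a. a \<noteq> 0) (map A [0..<n+1]) = A 0 # ys @ [A n]"
    unfolding u1 u2 u3 using fys A0 A1 A2 An1 An2 An by (simp add: ys_def[symmetric])
  have lys: "length ys = n - 5" unfolding ys_def by simp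
  have nth: "(A 0 # ys @ [A n]) ! j = (if j = 0 then A 0 else if j = n-4 then A n else A (j+2))"
    if "j < n-3" for j
  proof (cases "j = 0")
    case True then show ?thesis by simp
  next
    case False
    then have "(A 0 # ys @ [A n]) ! j = (ys @ [A n]) ! (j-1)" by (simp add: nth_Cons')
    also have "\<dots> = (if j = n-4 then A n else A (j+2))"
    proof (cases "j = n-4")
      case True then show ?thesis using lys n7 by (simp add: nth_append)
    next
      case F2: False
      then have "j - 1 < n - 5" using that False by simp
      then show ?thesis using lys F2 False unfolding ys_def by (simp add: nth_append)
    qed
    finally show ?thesis using False by simp
  qed
  show ?thesis unfolding log_concave_def L
  proof (intro allI impI)
    fix j assume j: "1 \<le> j \<and> j + 1 < length (A 0 # ys @ [A n])"
    then have j1: "1 \<le> j" "j + 1 < n - 3" using lys n7 by auto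
    have e0: "(A 0 # ys @ [A n]) ! (j-1) = (if j - 1 = 0 then A 0 else if j-1 = n-4 then A n else A (j-1+2))"
      using nth[of "j-1"] j1 by simp
    have e1: "(A 0 # ys @ [A n]) ! j = (if j = 0 then A 0 else if j = n-4 then A n else A (j+2))"
      using nth[of j] j1 by simp
    have e2: "(A 0 # ys @ [A n]) ! (j+1) = (if j+1 = 0 then A 0 else if j+1 = n-4 then A n else A (j+1+2))"
      using nth[of "j+1"] j1 by simp
    consider "j = 1" | "j = n - 5" "j \<noteq> 1" | "2 \<le> j" "j \<le> n - 6" using j1 by linarith
    then show "(A 0 # ys @ [A n]) ! (j-1) * (A 0 # ys @ [A n]) ! (j+1) \<le> ((A 0 # ys @ [A n]) ! j)^2"
    proof cases
      case 1
      have a: "(A 0 # ys @ [A n]) ! (j-1) = A 0" using e0 1 by simp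
      have ne: "j \<noteq> n - 4" "j + 1 \<noteq> n - 4" "j \<noteq> 0" using 1 n7 j1 by auto
      have "(A 0 # ys @ [A n]) ! j = A (j+2)" using e1 ne by simp
      then have b: "(A 0 # ys @ [A n]) ! j = A 3" using 1 by (simp add: numeral_eq_Suc)
      have "(A 0 # ys @ [A n]) ! (j+1) = A (j+1+2)" using e2 ne by simp
      then have c: "(A 0 # ys @ [A n]) ! (j+1) = A 4" using 1 by (simp add: numeral_eq_Suc)
      show ?thesis unfolding a b c using L3 .
    next
      case 2
      then have "j - 1 + 2 = n - 4" "j + 2 = n - 3" "j + 1 = n - 4" using n7 by auto
      then show ?thesis unfolding e0 e1 e2 using Ln3 2 n7 by simp
    next
      case 3
      have "A (j+2-1) * A (j+2+1) \<le> A (j+2) ^ 2" using Lmid[of "j+2"] 3 by simp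
      moreover have "j+2-1 = j-1+2" "j+2+1 = j+1+2" using 3 by auto
      ultimately have L: "A (j-1+2) * A (j+1+2) \<le> A (j+2) ^ 2" by simp
      have ne: "j - 1 \<noteq> 0" "j - 1 \<noteq> n - 4" "j \<noteq> n - 4" "j + 1 \<noteq> n - 4" "j \<noteq> 0" using 3 n7 by auto
      have a: "(A 0 # ys @ [A n]) ! (j-1) = A (j-1+2)" using e0 ne by simp
      have b: "(A 0 # ys @ [A n]) ! j = A (j+2)" using e1 ne by simp
      have c: "(A 0 # ys @ [A n]) ! (j+1) = A (j+1+2)" using e2 ne by simp
      show ?thesis unfolding a b c using L .
    qed
  qed
qed


lemma pow_par: "even (a + b) \<Longrightarrow> (-1::int)^a = (-1)^b"
  by (cases "even a") (auto simp: minus_one_power_iff)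

lemma XX_sym:
  assumes N: "odd N" and i: "i \<le> 2*N+1"
  shows "XX N (2*N+1-i) = XX N i"
proof -
  have b: "(2*N+1) choose (2*N+1-i) = (2*N+1) choose i" using i by (simp add: binomial_symmetric[symmetric])
  have e: "ee N (2*N+1-i) = ee N i"
  proof (cases "even i")
    case True
    then obtain k where k: "i = 2*k" by blast
    then have kN: "k \<le> N" using i by simp
    have d: "2*N+1-i = 2*(N-k)+1" using k kN by simp
    have "ee N (2*N+1-i) = (-1)^(N-k+1) * int (N choose (N-k))" unfolding d ee_def by simp
    also have "\<dots> = (-1)^k * int (N choose k)"
      using pow_par[of "N-k+1" k] N kN binomial_symmetric[OF kN] by simp
    also have "\<dots> = ee N i" unfolding k ee_def by simp
    finally show ?thesis .
  next
    case False
    then obtain k where k: "i = 2*k+1" using oddE by blast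
    then have kN: "k \<le> N" using i by simp
    have d: "2*N+1-i = 2*(N-k)" using k kN by simp
    have "ee N (2*N+1-i) = (-1)^(N-k) * int (N choose (N-k))" unfolding d ee_def by simp
    also have "\<dots> = (-1)^(k+1) * int (N choose k)"
      using pow_par[of "N-k" "k+1"] N kN binomial_symmetric[OF kN] by simp
    also have "\<dots> = ee N i" unfolding k ee_def by simp
    finally show ?thesis .
  qed
  show ?thesis unfolding XX_def b e ..
qed

lemma XX_0: "XX N 0 = 2*int N + 2" by (simp add: XX_def ee_def)
lemma XX_1: "XX N 1 = 0" by (simp add: XX_def ee_def)
lemma XX_2: "XX N 2 = 0"
proof -
  have "int ((2*N+1) choose 2) * fact 2 = (\<Prod>i<2. (int (2*N+1) - int i))" by (rule choose_prod)
  then have "int ((2*N+1) choose 2) * 2 = (2*int N+1) * (2*int N)" by (simp add: fact_numeral lessThan_nat_numeral)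
  then have "int ((2*N+1) choose 2) = (2*int N+1) * int N" by (simp add: algebra_simps)
  then show ?thesis by (simp add: XX_def ee_def)
qed

lemma choose_ge:
  assumes "r \<le> s" "s \<le> M - r" "2*r \<le> M"
  shows "M choose r \<le> M choose s"
proof (cases "2*s \<le> M")
  case True then show ?thesis using assms by (intro binomial_mono) auto
next
  case False
  have "M choose s = M choose (M-s)" using assms by (intro binomial_symmetric) auto
  moreover have "M choose r \<le> M choose (M-s)" using assms False by (intro binomial_mono) auto
  ultimately show ?thesis by simp
qed

lemma XX_pos:
  assumes N: "N \<ge> 4" and i: "3 \<le> i" "i \<le> N+1"
  shows "XX N i > 0"
proof -
  define c where "c = N choose (i div 2)"
  have c0: "c > 0" unfolding c_def using i by simp
  have s: "2 \<le> i - i div 2" "i - i div 2 \<le> (N+1) - 2" "i div 2 \<le> i" using i N by auto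
  have M: "(N+1) choose 2 \<le> (N+1) choose (i - i div 2)" using choose_ge[OF s(1,2)] N by simp
  have "int ((N+1) choose 2) * fact 2 = (\<Prod>i<2. (int (N+1) - int i))" by (rule choose_prod)
  then have h2: "int ((N+1) choose 2) * 2 = (int N+1) * int N" by (simp add: fact_numeral lessThan_nat_numeral)
  have "(int N+1)*int N \<ge> (int N+1)*4" using N by (intro mult_left_mono) auto
  moreover have "(int N+1)*4 = 4*int N + 4" by simp
  ultimately have "int ((N+1) choose 2) \<ge> 2*int N + 2" using h2 by linarith
  moreover have "int ((N+1) choose 2) \<le> int ((N+1) choose (i - i div 2))" using M by simp
  ultimately have C2: "int ((N+1) choose (i - i div 2)) \<ge> 2*int N + 2" by linarith
  have "c * ((N+1) choose (i - i div 2)) \<le> (2*N+1) choose i" using vand_le[OF s(3), of N] unfolding c_def .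
  then have "int c * int ((N+1) choose (i - i div 2)) \<le> int ((2*N+1) choose i)" by (metis of_nat_le_iff of_nat_mult)
  moreover have "int c * (2*int N + 2) \<le> int c * int ((N+1) choose (i - i div 2))" using C2 by (simp add: mult_left_mono)
  ultimately have B: "int c * (2*int N + 2) \<le> int ((2*N+1) choose i)" by linarith
  have "- int c \<le> ee N i" using ee_abs[of N i] unfolding c_def by simp
  then have "int (2*N+1) * (- int c) \<le> int (2*N+1) * ee N i" by (rule mult_left_mono) simp
  then have "XX N i \<ge> int ((2*N+1) choose i) - (2*int N+1) * int c" unfolding XX_def by (simp add: algebra_simps)
  then show ?thesis using B c0 by (simp add: algebra_simps)
qed

lemma XX_ineq_low:
  assumes N: "N \<ge> 15" and i: "4 \<le> i" "i \<le> N+1"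
  shows "XX N (i-1) * XX N (i+1) \<le> XX N i ^ 2"
proof -
  obtain t where t: "N = t + 15" using N le_Suc_ex by (metis add.commute)
  consider "i = 4" | "i = 5" | "i = 6" | "i = 7" | "8 \<le> i" using i by linarith
  then show ?thesis
  proof cases
    case 1 then show ?thesis using R4[of t] t by simp
  next
    case 2 then show ?thesis using R5[of t] t by simp
  next
    case 3 then show ?thesis using R6[of t] t by simp
  next
    case 4 then show ?thesis using R7[of t] t by simp
  next
    case 5 then show ?thesis using XX_ineq_gen[OF N 5 i(2)] by simp
  qed
qed

lemma XX_ineq_all:
  assumes N: "N \<ge> 15" "odd N" and i: "4 \<le> i" "i \<le> 2*N+1-4"
  shows "XX N (i-1) * XX N (i+1) \<le> XX N i ^ 2"
proof (cases "i \<le> N+1")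
  case True then show ?thesis using XX_ineq_low[OF N(1) i(1) True] by simp
next
  case False
  define j where "j = 2*N+1-i"
  have j: "4 \<le> j" "j \<le> N+1" using i False N unfolding j_def by auto
  have L: "XX N (j-1) * XX N (j+1) \<le> XX N j ^ 2" by (rule XX_ineq_low[OF N(1) j])
  have a: "XX N j = XX N i" unfolding j_def using XX_sym[OF N(2), of i] i by simp
  have b: "XX N (j+1) = XX N (i-1)"
  proof -
    have "j + 1 = 2*N+1-(i-1)" unfolding j_def using i False by simp
    then show ?thesis using XX_sym[OF N(2), of "i-1"] i by simp
  qed
  have c: "XX N (j-1) = XX N (i+1)"
  proof -
    have "j - 1 = 2*N+1-(i+1)" unfolding j_def using i False by simp
    then show ?thesis using XX_sym[OF N(2), of "i+1"] i False by simp
  qed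
  show ?thesis using L unfolding a b c by (simp add: mult.commute)
qed

lemma transfer_ineq:
  fixes a b c :: nat and M x y z :: int
  assumes "M > 0" "M * int a = x" "M * int b = y" "M * int c = z" "x * y \<le> z^2"
  shows "a * b \<le> c^2"
proof -
  have "(M*M) * int (a*b) = x*y" using assms(2,3) by (simp add: algebra_simps)
  moreover have "(M*M) * int (c^2) = z^2" using assms(4) by (simp add: algebra_simps power2_eq_square)
  ultimately have "(M*M) * int (a*b) \<le> (M*M) * int (c^2)" using assms(5) by simp
  then have "int (a*b) \<le> int (c^2)" using assms(1) by (simp add: mult_le_cancel_left_pos)
  then show ?thesis by (simp only: of_nat_le_iff)
qed

lemma c73: "(7::nat) choose 3 = 35" by code_simp
lemma c74: "(7::nat) choose 4 = 35" by code_simp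
lemma c32: "(3::nat) choose 2 = 3" by (simp add: numeral_eq_Suc)
lemma e30: "ee 3 0 = 1" by (simp add: ee_def)
lemma e33: "ee 3 3 = 3" by (simp add: ee_def)
lemma e34: "ee 3 4 = 3" by (simp add: ee_def c32)
lemma XX3: "XX 3 3 = 56" "XX 3 4 = 56" "XX 3 0 = 8"
  by (simp_all add: XX_def e33 e34 c73 c74 e30)

theorem mainTheorem1:
  fixes m :: nat
  assumes "m = 3 \<or> m \<ge> 5"
  shows "log_concave_code (hamming_code m) (2^m - 1)"
proof -
  define N :: nat where "N = 2^(m-1) - 1"
  have m3: "m \<ge> 3" using assms by auto
  obtain Q where Q: "(2::nat)^(m-2) = Q" by simp
  have Q1: "Q \<ge> 1" using Q by auto
  have em: "m - 1 = Suc (m-2)" using m3 by simp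
  have pm1: "(2::nat)^(m-1) = 2*Q" unfolding em power_Suc Q ..
  have "(2::nat)^(Suc (m-1)) = 2 * 2^(m-1)" by simp
  moreover have "Suc (m-1) = m" using m3 by simp
  ultimately have pm: "(2::nat)^m = 4*Q" using pm1 by simp
  have "(2::nat)^1 \<le> 2^(m-2)" using m3 by (intro power_increasing) auto
  then have Q2: "Q \<ge> 2" using Q by simp
  have Q8: "Q \<ge> 8" if "m \<noteq> 3"
  proof -
    have "(2::nat)^3 \<le> 2^(m-2)" using assms that by (intro power_increasing) auto
    then show ?thesis using Q by simp
  qed
  have NQ: "N = 2*Q - 1" unfolding N_def pm1 ..
  have oddN: "odd N" using NQ Q1 by presburger
  have N3: "N \<ge> 3" using NQ Q2 by simp
  have N15: "N \<ge> 15" if "m \<noteq> 3" using NQ Q8[OF that] by simp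
  have nN: "2^m - 1 = 2*N+1" and nN2: "(2::nat)^m = 2*N+2" using pm NQ Q1 by auto
  define M where "M = int (2*N+2)"
  have M0: "M > 0" unfolding M_def by simp
  have hA: "M * int (Acnt m i) = XX N i" if "i \<le> 2*N+1" for i
    using A_formula[of m N i] m3 that unfolding N_def M_def nN nN2 by simp
  have wc: "weight_count (hamming_code m) (2^m-1) = Acnt m" by (rule ext) (rule wc_eq)
  have zero: "Acnt m i = 0" if "i \<le> 2*N+1" "XX N i = 0" for i using hA[OF that(1)] that(2) M0 by simp
  have pos: "Acnt m i > 0" if "i \<le> 2*N+1" "XX N i > 0" for i using hA[OF that(1)] that(2) M0
    by (metis gr0I mult_zero_right of_nat_0 order_less_irrefl)
  have tr: "Acnt m a * Acnt m b \<le> Acnt m c ^ 2" if "a \<le> 2*N+1" "b \<le> 2*N+1" "c \<le> 2*N+1"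
     "XX N a * XX N b \<le> XX N c ^ 2" for a b c
    by (rule transfer_ineq[OF M0 hA[OF that(1)] hA[OF that(2)] hA[OF that(3)] that(4)])
  have s0: "XX N (2*N+1-0) = XX N 0" "XX N (2*N+1-1) = XX N 1" "XX N (2*N+1-2) = XX N 2"
    "XX N (2*N+1-3) = XX N 3" "XX N (2*N+1-4) = XX N 4"
    using XX_sym[OF oddN, of 0] XX_sym[OF oddN, of 1] XX_sym[OF oddN, of 2] XX_sym[OF oddN, of 3]
      XX_sym[OF oddN, of 4] N3 by simp_all
  have L3x: "XX N 0 * XX N 4 \<le> XX N 3 ^ 2"
  proof (cases "m = 3")
    case True then have "N = 3" unfolding N_def by simp
    then show ?thesis using XX3 by simp
  next
    case False then have "N \<ge> 15" by (rule N15)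
    then obtain t where t: "N = t + 15" using le_Suc_ex by (metis add.commute)
    then show ?thesis using R3[of t] by simp
  qed
  have Xpos: "XX N i > 0" if "3 \<le> i" "i \<le> 2*N+1-3" for i
  proof (cases "m = 3")
    case True then have N: "N = 3" unfolding N_def by simp
    then have "i = 3 \<or> i = 4" using that by auto
    then show ?thesis using XX3 N by auto
  next
    case False then have N: "N \<ge> 15" by (rule N15)
    show ?thesis
    proof (cases "i \<le> N+1")
      case True then show ?thesis using XX_pos[of N i] N that by simp
    next
      case False
      have "XX N (2*N+1-i) > 0" using XX_pos[of N "2*N+1-i"] N that False by simp
      then show ?thesis using XX_sym[OF oddN, of i] that by simp
    qed
  qed
  have "log_concave (filter (\<lambda>a. a \<noteq> 0) (map (Acnt m) [0..<(2*N+1)+1]))"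
  proof (rule main_general)
    show "2*N+1 \<ge> 7" using N3 by simp
    show "Acnt m 0 > 0" by (simp add: Acnt_0)
    show "Acnt m 1 = 0" by (rule Acnt_1)
    show "Acnt m 2 = 0" using zero[of 2] XX_2 N3 by simp
    show "Acnt m (2*N+1-1) = 0" using zero[of "2*N+1-1"] s0 XX_1 by simp
    show "Acnt m (2*N+1-2) = 0" using zero[of "2*N+1-2"] s0 XX_2 by simp
    show "Acnt m (2*N+1) > 0" using pos[of "2*N+1"] s0 XX_0 by simp
    show "Acnt m i > 0" if "3 \<le> i" "i \<le> 2*N+1-3" for i using pos[of i] Xpos[OF that] that by simp
    show "Acnt m 0 * Acnt m 4 \<le> Acnt m 3 ^ 2" using tr[of 0 4 3] L3x N3 by simp
    show "Acnt m (2*N+1-4) * Acnt m (2*N+1) \<le> Acnt m (2*N+1-3) ^ 2"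
      using tr[of "2*N+1-4" "2*N+1" "2*N+1-3"] L3x s0 by (simp add: mult.commute)
    show "Acnt m (i-1) * Acnt m (i+1) \<le> Acnt m i ^ 2" if "4 \<le> i" "i \<le> 2*N+1-4" for i
    proof -
      have "m \<noteq> 3"
      proof
        assume "m = 3"
        then have "N = 3" unfolding N_def by simp
        then show False using that by simp
      qed
      then have N: "N \<ge> 15" by (rule N15)
      show ?thesis using tr[of "i-1" "i+1" i] XX_ineq_all[OF N oddN that] that by simp
    qed
  qed
  then show ?thesis unfolding log_concave_code_def nonzero_weight_distribution_def wc unfolding nN .
qed


end
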